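(* Let $n$ be a positive integer and $\alpha\in[0,1]$, and let $G$ be a split graph that arises from the disjoint union of a clique $C$ of order $\alpha n$ and an independent set $I$ of order $(1-\alpha)n$ by adding $m$ edges between vertices in $C$ and vertices in $I$. Then $$Mo(G) \leq ((1+\alpha)n-1)m-\frac{2m^2}{(1-\alpha)n} \leq \begin{cases} \alpha(1-\alpha)n^2\big((1-\alpha)n-1\big) & \text{if } \alpha\leq \frac{1}{3}-\frac{1}{3n},\\[2mm] \frac{1}{8}(1-\alpha)n\big((1+\alpha)n-1\big)^2 & \text{if } \alpha>\frac{1}{3}-\frac{1}{3n}, \end{cases}$$ and moreover $Mo(G)\leq \frac{4}{27}n^3$.
   Context: All graphs are finite and simple. For a graph $G$ and an edge $uv$ of $G$, $n_G(u,v)$ denotes the number of vertices of $G$ whose distance in $G$ to $u$ is strictly smaller than their distance in $G$ to $v$. The Mostar index of $G$ is $Mo(G)=\sum_{uv\in E(G)}|n_G(u,v)-n_G(v,u)|$. Here $\alpha n$ and $(1-\alpha)n$ are the (integer) orders of $C$ and $I$. *)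

theory Defs
  imports Complex_Main "HOL-Library.Extended_Nat"
begin

definition simple_graph :: "'a set \<Rightarrow> ('a \<Rightarrow> 'a \<Rightarrow> bool) \<Rightarrow> bool" where
  "simple_graph V E \<longleftrightarrow> finite V \<and> (\<forall>x y. E x y \<longrightarrow> x \<in> V \<and> y \<in> V)
     \<and> (\<forall>x y. E x y \<longrightarrow> E y x) \<and> (\<forall>x. \<not> E x x)"

definition is_walk :: "('a \<Rightarrow> 'a \<Rightarrow> bool) \<Rightarrow> 'a list \<Rightarrow> bool" where
  "is_walk E xs \<longleftrightarrow> xs \<noteq> [] \<and> (\<forall>i. Suc i < length xs \<longrightarrow> E (xs ! i) (xs ! Suc i))"

text \<open>Graph distance (infinite if no walk exists); a one-vertex walk gives distance 0,
  which needs the vertex to lie in V.\<close>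
definition gdist :: "'a set \<Rightarrow> ('a \<Rightarrow> 'a \<Rightarrow> bool) \<Rightarrow> 'a \<Rightarrow> 'a \<Rightarrow> enat" where
  "gdist V E u v = (INF k \<in> {k. \<exists>xs. is_walk E xs \<and> set xs \<subseteq> V \<and> length xs = Suc k
                                \<and> hd xs = u \<and> last xs = v}. enat k)"

definition n_closer :: "'a set \<Rightarrow> ('a \<Rightarrow> 'a \<Rightarrow> bool) \<Rightarrow> 'a \<Rightarrow> 'a \<Rightarrow> nat" where
  "n_closer V E u v = card {w \<in> V. gdist V E w u < gdist V E w v}"

text \<open>Each unordered
  edge corresponds to exactly two ordered adjacent pairs, and the summand is symmetric,
  so we sum over ordered pairs and halve.\<close>
definition mostar :: "'a set \<Rightarrow> ('a \<Rightarrow> 'a \<Rightarrow> bool) \<Rightarrow> real" where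
  "mostar V E = (\<Sum>p \<in> {(u,v). u \<in> V \<and> v \<in> V \<and> E u v}.
       \<bar>real (n_closer V E (fst p) (snd p)) - real (n_closer V E (snd p) (fst p))\<bar>) / 2"

end

theory Submission
  imports Defs
begin


lemma arith_if:
  fixes c i M :: real
  assumes ip: "i > 0" and c0: "c \<ge> 0" and M0: "0 \<le> M" and Mle: "M \<le> c * i" and h: "3 * c \<le> i + c - 1"
  shows "(i + 2 * c - 1) * M - 2 * M^2 / i \<le> c * i * (i - 1)"
proof -
  have eq: "c * i * (i - 1) - ((i + 2 * c - 1) * M - 2 * M^2 / i) = (c * i - M) * ((i + 2 * c - 1) - 2 * (c * i + M) / i)"
    using ip by (simp add: field_simps power2_eq_square)
  have "(c * i + M) / i \<le> 2 * c" using ip Mle by (simp add: divide_le_eq)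
  then have "0 \<le> (i + 2 * c - 1) - 2 * (c * i + M) / i" using h by linarith
  moreover have "0 \<le> c * i - M" using Mle by simp
  ultimately have "0 \<le> (c * i - M) * ((i + 2 * c - 1) - 2 * (c * i + M) / i)" by simp
  then show ?thesis using eq by linarith
qed

lemma arith_else:
  fixes A i M :: real
  assumes ip: "i > 0"
  shows "A * M - 2 * M^2 / i \<le> i * A^2 / 8"
proof -
  have eq: "i * A^2 / 8 - (A * M - 2 * M^2 / i) = (A * i - 4 * M)^2 / (8 * i)"
    using ip by (simp add: field_simps power2_eq_square)
  have "0 \<le> (A * i - 4 * M)^2 / (8 * i)" using ip by simp
  then show ?thesis using eq by linarith
qed

lemma cubic1: fixes a :: real assumes "0 \<le> a" "a \<le> 1" shows "a * (1 - a)^2 \<le> 4/27"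
proof -
  have "4/27 - a * (1 - a)^2 = (3*a - 1)^2 * (4 - 3*a) / 27" by (simp add: power2_eq_square algebra_simps)
  moreover have "0 \<le> (3*a - 1)^2 * (4 - 3*a) / 27" using assms by simp
  ultimately show ?thesis by linarith
qed

lemma cubic2: fixes a :: real assumes "0 \<le> a" "a \<le> 1" shows "(1 - a) * (1 + a)^2 / 8 \<le> 4/27"
proof -
  have "32/27 - (1 - a) * (1 + a)^2 = (a - 1/3)^2 * (a + 5/3)" by (simp add: power2_eq_square algebra_simps)
  moreover have "0 \<le> (a - 1/3)^2 * (a + 5/3)" using assms by simp
  ultimately show ?thesis by linarith
qed



lemma gdist_le_walk:
  assumes "is_walk E xs" "set xs \<subseteq> V" "hd xs = u" "last xs = v"
  shows "gdist V E u v \<le> enat (length xs - 1)"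
proof -
  have "xs \<noteq> []" using assms(1) by (simp add: is_walk_def)
  then have "length xs = Suc (length xs - 1)" by simp
  then have "length xs - 1 \<in> {k. \<exists>xs. is_walk E xs \<and> set xs \<subseteq> V \<and> length xs = Suc k
                                \<and> hd xs = u \<and> last xs = v}" using assms by blast
  then show ?thesis unfolding gdist_def by (rule INF_lower)
qed

lemma gdist_self: "x \<in> V \<Longrightarrow> gdist V E x x = 0"
proof -
  assume "x \<in> V"
  then have "gdist V E x x \<le> 0"
    using gdist_le_walk[of E "[x]" V x x] by (simp add: is_walk_def zero_enat_def)
  then show ?thesis by simp
qed

lemma gdist_edge: "simple_graph V E \<Longrightarrow> E x y \<Longrightarrow> gdist V E x y \<le> 1"
  using gdist_le_walk[of E "[x,y]" V x y]
  by (simp add: is_walk_def simple_graph_def one_enat_def less_Suc_eq)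

lemma gdist_two: "simple_graph V E \<Longrightarrow> E x y \<Longrightarrow> E y z \<Longrightarrow> gdist V E x z \<le> 2"
proof -
  assume g: "simple_graph V E" and e: "E x y" "E y z"
  have "is_walk E [x,y,z]" using e unfolding is_walk_def
    by (auto simp: less_Suc_eq nth_Cons split: nat.splits)
  moreover have "set [x,y,z] \<subseteq> V" using g e by (auto simp: simple_graph_def)
  moreover have "enat (length [x,y,z] - 1) = 2" by (simp add: numeral_eq_enat)
  ultimately show ?thesis using gdist_le_walk[of E "[x,y,z]" V x z] by simp
qed

lemma walk_facts:
  assumes "is_walk E xs" "length xs = Suc k" "hd xs = u" "last xs = v"
  shows "(k = 0 \<longrightarrow> u = v) \<and> (k = 1 \<longrightarrow> E u v) \<and> (k \<ge> 1 \<longrightarrow> E u (xs ! 1))"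
proof -
  have ne: "xs \<noteq> []" using assms(2) by auto
  have h: "u = xs ! 0" using assms(3) ne by (simp add: hd_conv_nth)
  have l: "v = xs ! k" using assms(4) ne assms(2) by (simp add: last_conv_nth)
  show ?thesis using h l assms(1,2) unfolding is_walk_def by auto
qed

lemma gdist_ge1: assumes "x \<noteq> y" shows "1 \<le> gdist V E x y"
  unfolding gdist_def
proof (rule INF_greatest)
  fix k assume "k \<in> {k. \<exists>xs. is_walk E xs \<and> set xs \<subseteq> V \<and> length xs = Suc k \<and> hd xs = x \<and> last xs = y}"
  then obtain xs where "is_walk E xs" "length xs = Suc k" "hd xs = x" "last xs = y" by blast
  from walk_facts[OF this] assms have "k \<noteq> 0" by blast
  then show "1 \<le> enat k" by (simp add: one_enat_def)
qed

lemma gdist_ge2: assumes "x \<noteq> y" "\<not> E x y" shows "2 \<le> gdist V E x y"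
  unfolding gdist_def
proof (rule INF_greatest)
  fix k assume "k \<in> {k. \<exists>xs. is_walk E xs \<and> set xs \<subseteq> V \<and> length xs = Suc k \<and> hd xs = x \<and> last xs = y}"
  then obtain xs where "is_walk E xs" "length xs = Suc k" "hd xs = x" "last xs = y" by blast
  from walk_facts[OF this] assms have "k \<noteq> 0" "k \<noteq> 1" by blast+
  then show "2 \<le> enat k" by (simp add: numeral_eq_enat)
qed

lemma gdist_fin: assumes "gdist V E x y < \<infinity>" "x \<noteq> y" shows "\<exists>z. E x z"
proof -
  let ?K = "{k. \<exists>xs. is_walk E xs \<and> set xs \<subseteq> V \<and> length xs = Suc k \<and> hd xs = x \<and> last xs = y}"
  have "?K \<noteq> {}"
  proof
    assume "?K = {}"
    then have "gdist V E x y = \<infinity>" unfolding gdist_def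
      by (simp only: INF_empty) (simp add: top_enat_def)
    with assms show False by simp
  qed
  then obtain k xs where "is_walk E xs" "length xs = Suc k" "hd xs = x" "last xs = y" by blast
  from walk_facts[OF this] assms(2) show ?thesis by (cases k) auto
qed

lemma lt_contra: "(a::'b::linorder) < b \<Longrightarrow> b \<le> k \<Longrightarrow> k \<le> a \<Longrightarrow> False"
  by (meson leD less_le_trans order_trans)

lemma cs_ineq: fixes f :: "'b \<Rightarrow> real" assumes "finite A"
  shows "(\<Sum>x\<in>A. f x)^2 / real (card A) \<le> (\<Sum>x\<in>A. (f x)^2)"
proof (cases "card A = 0")
  case True then show ?thesis by (simp add: sum_nonneg)
next
  case False
  define k where "k = real (card A)"
  define S where "S = (\<Sum>x\<in>A. f x)"
  define mu where "mu = S / k"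
  have kp: "k > 0" using False k_def by simp
  have "0 \<le> (\<Sum>x\<in>A. (f x - mu)^2)" by (simp add: sum_nonneg)
  also have "(\<Sum>x\<in>A. (f x - mu)^2) = (\<Sum>x\<in>A. (f x)^2) + (\<Sum>x\<in>A. mu^2) - (\<Sum>x\<in>A. f x * (2 * mu))"
    by (simp add: power2_diff sum_subtractf sum.distrib algebra_simps)
  also have "\<dots> = (\<Sum>x\<in>A. (f x)^2) + k * mu^2 - S * (2 * mu)"
    by (simp add: sum_distrib_right[symmetric] k_def S_def)
  also have "\<dots> = (\<Sum>x\<in>A. (f x)^2) - S^2 / k"
    using kp unfolding mu_def by (simp add: field_simps power2_eq_square)
  finally show ?thesis unfolding S_def k_def by simp
qed

locale splitg =
  fixes V C I :: "'a set" and E :: "'a \<Rightarrow> 'a \<Rightarrow> bool"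
  assumes graph: "simple_graph V E"
    and split: "V = C \<union> I" "C \<inter> I = {}"
    and clique: "\<forall>x\<in>C. \<forall>y\<in>C. x \<noteq> y \<longrightarrow> E x y"
    and indep: "\<forall>x\<in>I. \<forall>y\<in>I. \<not> E x y"
begin

abbreviation "gd \<equiv> gdist V E"

lemma finV: "finite V" using graph by (simp add: simple_graph_def)
lemma inV: "E x y \<Longrightarrow> x \<in> V \<and> y \<in> V" using graph by (simp add: simple_graph_def)
lemma symE: "E x y \<Longrightarrow> E y x" using graph by (simp add: simple_graph_def)
lemma irrE: "\<not> E x x" using graph by (simp add: simple_graph_def)

lemma nbr_I: "w \<in> I \<Longrightarrow> E w z \<Longrightarrow> z \<in> C"
  using inV[of w z] indep split by blast

lemma CI_S2: assumes u: "u \<in> C" and v: "v \<in> I" and e: "E u v"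
  shows "{w \<in> V. gd w v < gd w u} = {v}"
proof
  show "{v} \<subseteq> {w \<in> V. gd w v < gd w u}"
  proof -
    have "u \<noteq> v" using e irrE by auto
    then have "1 \<le> gd v u" by (intro gdist_ge1) auto
    moreover have "gd v v = 0" using v split by (intro gdist_self) auto
    ultimately have "gd v v < gd v u" by (metis order.strict_trans2 zero_less_one)
    moreover have "v \<in> V" using v split by blast
    ultimately show ?thesis by blast
  qed
  show "{w \<in> V. gd w v < gd w u} \<subseteq> {v}"
  proof
    fix w assume w: "w \<in> {w \<in> V. gd w v < gd w u}"
    show "w \<in> {v}"
    proof (rule ccontr)
      assume wv: "w \<notin> {v}"
      have lt: "gd w v < gd w u" using w by auto
      have g1: "1 \<le> gd w v" using wv by (intro gdist_ge1) auto
      have "gd w v < \<infinity>" using lt by (metis enat_ord_simps(4) enat_ord_simps(6))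
      then obtain z where wz: "E w z" using gdist_fin[of V E w v] wv by auto
      show False
      proof (cases "w \<in> C")
        case True
        show False
        proof (cases "w = u")
          case True
          have "gd u u = 0" using u split by (intro gdist_self) auto
          then show False using lt True by simp
        next
          case False
          then have "E w u" using True u clique by blast
          then have "gd w u \<le> 1" by (intro gdist_edge graph)
          show False using lt \<open>gd w u \<le> 1\<close> g1 by (rule lt_contra)
        qed
      next
        case False
        then have wI: "w \<in> I" using w split by auto
        then have zC: "z \<in> C" using nbr_I wz by auto
        show False
        proof (cases "z = u")
          case True
          then have "gd w u \<le> 1" using wz gdist_edge[OF graph, of w z] by simp
          show False using lt \<open>gd w u \<le> 1\<close> g1 by (rule lt_contra)
        next
          case False
          then have "E z u" using zC u clique by blast
          then have "gd w u \<le> 2" using wz gdist_two[OF graph, of w z u] by simp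
          moreover have "2 \<le> gd w v" using wv wI v indep by (intro gdist_ge2) blast+
          ultimately show False using lt_contra[OF lt] by blast
        qed
      qed
    qed
  qed
qed


lemma CI_S1: assumes u: "u \<in> C" and v: "v \<in> I" and e: "E u v"
  and w: "w \<in> V" "gd w u < gd w v"
  shows "w \<noteq> v \<and> \<not> (w \<in> C \<and> w \<noteq> u \<and> E w v)"
proof
  show "w \<noteq> v"
  proof
    assume "w = v"
    then have "gd w v = 0" using v split by (simp add: gdist_self)
    then show False using w(2) by simp
  qed
  show "\<not> (w \<in> C \<and> w \<noteq> u \<and> E w v)"
  proof
    assume h: "w \<in> C \<and> w \<noteq> u \<and> E w v"
    then have a: "gd w v \<le> 1" by (intro gdist_edge graph) blast
    have "w \<noteq> u" using h by auto
    then have b: "1 \<le> gd w u" by (rule gdist_ge1)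
    show False using w(2) a b by (rule lt_contra)
  qed
qed

lemma self_closer: assumes "u \<in> V" "u \<noteq> v" shows "gd u u < gd u v"
proof -
  have "gd u u = 0" using assms by (simp add: gdist_self)
  moreover have "1 \<le> gd u v" using assms by (intro gdist_ge1)
  ultimately show ?thesis by (metis order.strict_trans2 zero_less_one)
qed

lemma CC_S1: assumes u: "u \<in> C" and v: "v \<in> C" and uv: "u \<noteq> v"
  and w: "w \<in> V" "gd w u < gd w v"
  shows "w \<in> insert u {x \<in> I. E u x \<and> \<not> E v x}"
proof (rule ccontr)
  assume nw: "w \<notin> insert u {x \<in> I. E u x \<and> \<not> E v x}"
  then have wu: "w \<noteq> u" by blast
  have g1: "1 \<le> gd w u" using wu by (rule gdist_ge1)
  have wv: "w \<noteq> v"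
  proof
    assume "w = v"
    then have "gd w v = 0" using v split by (simp add: gdist_self)
    then show False using w(2) by simp
  qed
  show False
  proof (cases "w \<in> C")
    case True
    then have "E w v" using v clique wv by blast
    then have a: "gd w v \<le> 1" by (intro gdist_edge graph)
    show False using w(2) a g1 by (rule lt_contra)
  next
    case False
    then have wI: "w \<in> I" using w split by blast
    have "gd w u < \<infinity>" using w(2) by (metis enat_ord_simps(4) enat_ord_simps(6))
    then obtain z where wz: "E w z" using gdist_fin[of V E w u] wu by auto
    have zC: "z \<in> C" using nbr_I wI wz by blast
    have "E w u"
    proof (rule ccontr)
      assume "\<not> E w u"
      then have g2: "2 \<le> gd w u" using wu by (intro gdist_ge2)
      show False
      proof (cases "z = v")
        case True
        then have a: "gd w v \<le> 1" using wz gdist_edge[OF graph, of w z] by simp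
        have "(1::enat) \<le> 2" by simp
        then have "1 \<le> gd w u" using g2 by (rule order_trans)
        show False using w(2) a \<open>1 \<le> gd w u\<close> by (rule lt_contra)
      next
        case False
        then have "E z v" using zC v clique by blast
        then have a: "gd w v \<le> 2" using wz gdist_two[OF graph, of w z v] by simp
        show False using w(2) a g2 by (rule lt_contra)
      qed
    qed
    moreover have "\<not> E w v"
    proof
      assume "E w v"
      then have a: "gd w v \<le> 1" by (intro gdist_edge graph)
      show False using w(2) a g1 by (rule lt_contra)
    qed
    ultimately show False using nw wI symE by blast
  qed
qed


lemma finC: "finite C" using finV split by auto
lemma finI: "finite I" using finV split by auto

lemma CI_bound: assumes u: "u \<in> C" and v: "v \<in> I" and e: "E u v"
  shows "\<bar>real (n_closer V E u v) - real (n_closer V E v u)\<bar>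
     \<le> real (card V) - 1 - real (card {x \<in> C. E x v})"
proof -
  define S1 where "S1 = {w \<in> V. gd w u < gd w v}"
  define D where "D = {x \<in> C. E x v}"
  have n2: "n_closer V E v u = 1" unfolding n_closer_def using CI_S2[OF u v e] by simp
  have n1: "n_closer V E u v = card S1" unfolding n_closer_def S1_def by simp
  have uv: "u \<noteq> v" using e irrE by auto
  have uV: "u \<in> V" using u split by auto
  have uS: "u \<in> S1" unfolding S1_def using self_closer[OF uV uv] uV by simp
  have fS: "finite S1" unfolding S1_def using finV by simp
  have fD: "finite D" unfolding D_def using finC by simp
  have uD: "u \<in> D" unfolding D_def using u e by simp
  have vD: "v \<notin> D" unfolding D_def using v split by auto
  have disj: "S1 \<inter> insert v (D - {u}) = {}"
    using CI_S1[OF u v e] unfolding S1_def D_def by blast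
  have sub: "S1 \<union> insert v (D - {u}) \<subseteq> V"
    unfolding S1_def D_def using split v by auto
  have "card (S1 \<union> insert v (D - {u})) \<le> card V" using sub finV by (rule card_mono[rotated])
  moreover have "card (S1 \<union> insert v (D - {u})) = card S1 + card (insert v (D - {u}))"
    using disj fS fD by (intro card_Un_disjoint) auto
  moreover have "card (insert v (D - {u})) = card D"
  proof -
    have "card D > 0" using fD uD card_gt_0_iff by blast
    then show ?thesis using vD fD uD by (simp add: card_Diff_singleton)
  qed
  ultimately have le: "card S1 + card D \<le> card V" by simp
  have ge: "1 \<le> card S1" using uS fS by (metis card_0_eq empty_iff less_one not_le)
  have "real (card S1) + real (card D) \<le> real (card V)" using le by linarith
  moreover have "1 \<le> real (card S1)" using ge by linarith
  moreover have "1 \<le> real (card D)" using uD fD by (metis card_0_eq empty_iff less_one not_le of_nat_1 of_nat_le_iff)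
  ultimately show ?thesis unfolding n1 n2 D_def[symmetric] by linarith
qed

lemma CC_bound: assumes u: "u \<in> C" and v: "v \<in> C" and uv: "u \<noteq> v"
  shows "\<bar>real (n_closer V E u v) - real (n_closer V E v u)\<bar>
     \<le> real (card {x \<in> I. E u x \<noteq> E v x})"
proof -
  define S1 where "S1 = {w \<in> V. gd w u < gd w v}"
  define S2 where "S2 = {w \<in> V. gd w v < gd w u}"
  define A where "A = {x \<in> I. E u x \<and> \<not> E v x}"
  define B where "B = {x \<in> I. E v x \<and> \<not> E u x}"
  have n1: "n_closer V E u v = card S1" unfolding n_closer_def S1_def by simp
  have n2: "n_closer V E v u = card S2" unfolding n_closer_def S2_def by simp
  have uV: "u \<in> V" and vV: "v \<in> V" using u v split by auto
  have uS: "u \<in> S1" unfolding S1_def using self_closer[OF uV uv] uV by simp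
  have vS: "v \<in> S2" unfolding S2_def using self_closer[OF vV uv[symmetric]] vV by simp
  have fS1: "finite S1" unfolding S1_def using finV by simp
  have fS2: "finite S2" unfolding S2_def using finV by simp
  have fA: "finite A" unfolding A_def using finI by simp
  have fB: "finite B" unfolding B_def using finI by simp
  have "S1 \<subseteq> insert u A" unfolding S1_def A_def using CC_S1[OF u v uv] by blast
  then have "card S1 \<le> card (insert u A)" using fA by (intro card_mono) auto
  also have "\<dots> \<le> Suc (card A)" using fA by (simp add: card_insert_if)
  finally have a1: "card S1 \<le> Suc (card A)" .
  have "S2 \<subseteq> insert v B" unfolding S2_def B_def using CC_S1[OF v u uv[symmetric]] by blast
  then have "card S2 \<le> card (insert v B)" using fB by (intro card_mono) auto
  also have "\<dots> \<le> Suc (card B)" using fB by (simp add: card_insert_if)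
  finally have a2: "card S2 \<le> Suc (card B)" .
  have b1: "1 \<le> card S1" using uS fS1 by (metis card_0_eq empty_iff less_one not_le)
  have b2: "1 \<le> card S2" using vS fS2 by (metis card_0_eq empty_iff less_one not_le)
  have "{x \<in> I. E u x \<noteq> E v x} = A \<union> B" unfolding A_def B_def by auto
  moreover have "card (A \<union> B) = card A + card B"
    using fA fB by (intro card_Un_disjoint) (auto simp: A_def B_def)
  ultimately have c: "card {x \<in> I. E u x \<noteq> E v x} = card A + card B" by simp
  show ?thesis unfolding n1 n2 c using a1 a2 b1 b2 by linarith
qed


lemma card_sum_ind: "finite A \<Longrightarrow> real (card {x \<in> A. Q x}) = (\<Sum>x\<in>A. if Q x then 1 else 0)"
  by (simp add: sum.inter_filter[symmetric])

definition "dg x = card {u \<in> C. E u x}"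
definition "ind u x = (if E u x then 1 else 0 :: real)"

lemma dg_sum: "real (dg x) = (\<Sum>u\<in>C. ind u x)"
  unfolding dg_def ind_def using finC by (rule card_sum_ind)

definition "bet p = (if fst p \<in> C \<and> snd p \<in> C then real (card {x \<in> I. E (fst p) x \<noteq> E (snd p) x})
   else if fst p \<in> C then real (card V) - 1 - real (dg (snd p))
   else real (card V) - 1 - real (dg (fst p)))"

lemma pair_le: assumes "u \<in> V" "v \<in> V" "E u v"
  shows "\<bar>real (n_closer V E u v) - real (n_closer V E v u)\<bar> \<le> bet (u, v)"
proof (cases "u \<in> C")
  case True
  show ?thesis
  proof (cases "v \<in> C")
    case True
    have "u \<noteq> v" using assms irrE by auto
    then show ?thesis using CC_bound[OF \<open>u \<in> C\<close> True] \<open>u \<in> C\<close> True by (simp add: bet_def)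
  next
    case False
    then have "v \<in> I" using assms split by auto
    then show ?thesis using CI_bound[OF \<open>u \<in> C\<close> _ assms(3)] \<open>u \<in> C\<close> False
      by (simp add: bet_def dg_def)
  qed
next
  case False
  then have uI: "u \<in> I" using assms split by auto
  then have vC: "v \<in> C" using nbr_I assms by auto
  have "E v u" using assms symE by auto
  then show ?thesis using CI_bound[OF vC uI] False
    by (simp add: bet_def dg_def abs_minus_commute)
qed

lemma mostar_le: "mostar V E \<le> (\<Sum>p \<in> {(u,v). u \<in> V \<and> v \<in> V \<and> E u v}. bet p) / 2"
proof -
  have fP: "finite {(u,v). u \<in> V \<and> v \<in> V \<and> E u v}"
    by (rule finite_subset[of _ "V \<times> V"]) (auto simp: finV)
  have "(\<Sum>p \<in> {(u,v). u \<in> V \<and> v \<in> V \<and> E u v}.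
       \<bar>real (n_closer V E (fst p) (snd p)) - real (n_closer V E (snd p) (fst p))\<bar>)
     \<le> (\<Sum>p \<in> {(u,v). u \<in> V \<and> v \<in> V \<and> E u v}. bet p)"
    by (rule sum_mono) (use pair_le in auto)
  then show ?thesis unfolding mostar_def by simp
qed


lemma sum_bet: "(\<Sum>p \<in> {(u,v). u \<in> V \<and> v \<in> V \<and> E u v}. bet p)
   = 2 * (\<Sum>x\<in>I. real (dg x) * (real (card V) + real (card C) - 1) - 2 * real (dg x)^2)"
proof -
  define g where "g u v = (if E u v then bet (u,v) else 0)" for u v
  define N where "N = real (card V)"
  define c where "c = real (card C)"
  have P: "{(u,v). u \<in> V \<and> v \<in> V \<and> E u v} = {p \<in> V \<times> V. E (fst p) (snd p)}" by auto
  have S0: "(\<Sum>p \<in> {(u,v). u \<in> V \<and> v \<in> V \<and> E u v}. bet p) = (\<Sum>u\<in>V. \<Sum>v\<in>V. g u v)"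
  proof -
    have "(\<Sum>p \<in> {(u,v). u \<in> V \<and> v \<in> V \<and> E u v}. bet p)
       = (\<Sum>p\<in>V \<times> V. if E (fst p) (snd p) then bet p else 0)"
      unfolding P using finV by (simp add: sum.inter_filter)
    also have "\<dots> = (\<Sum>u\<in>V. \<Sum>v\<in>V. g u v)"
      unfolding sum.cartesian_product g_def by (rule sum.cong) auto
    finally show ?thesis .
  qed
  have dj: "C \<inter> I = {}" using split by simp
  have inner: "(\<Sum>v\<in>V. g u v) = (\<Sum>v\<in>C. g u v) + (\<Sum>v\<in>I. g u v)" for u
    unfolding split(1) using finC finI dj by (rule sum.union_disjoint)
  have S1: "(\<Sum>u\<in>V. \<Sum>v\<in>V. g u v) = (\<Sum>u\<in>C. \<Sum>v\<in>C. g u v) + (\<Sum>u\<in>C. \<Sum>v\<in>I. g u v)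
      + ((\<Sum>u\<in>I. \<Sum>v\<in>C. g u v) + (\<Sum>u\<in>I. \<Sum>v\<in>I. g u v))"
  proof -
    have "(\<Sum>u\<in>V. \<Sum>v\<in>V. g u v) = (\<Sum>u\<in>C. \<Sum>v\<in>V. g u v) + (\<Sum>u\<in>I. \<Sum>v\<in>V. g u v)"
      unfolding split(1) using finC finI dj by (rule sum.union_disjoint)
    then show ?thesis unfolding inner by (simp add: sum.distrib)
  qed
  have II: "(\<Sum>u\<in>I. \<Sum>v\<in>I. g u v) = 0" using indep by (simp add: g_def)
  have CC: "(\<Sum>u\<in>C. \<Sum>v\<in>C. g u v) = (\<Sum>x\<in>I. 2 * c * real (dg x) - 2 * real (dg x)^2)"
  proof -
    have gcc: "g u v = (\<Sum>x\<in>I. ind u x + ind v x - 2 * ind u x * ind v x)" if "u \<in> C" "v \<in> C" for u v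
    proof -
      have "g u v = real (card {x \<in> I. E u x \<noteq> E v x})"
      proof (cases "u = v")
        case True then show ?thesis by (simp add: g_def irrE)
      next
        case False then show ?thesis using that clique by (simp add: g_def bet_def)
      qed
      also have "\<dots> = (\<Sum>x\<in>I. if E u x \<noteq> E v x then 1 else 0)" using finI by (rule card_sum_ind)
      also have "\<dots> = (\<Sum>x\<in>I. ind u x + ind v x - 2 * ind u x * ind v x)"
        by (rule sum.cong) (auto simp: ind_def)
      finally show ?thesis .
    qed
    have "(\<Sum>u\<in>C. \<Sum>v\<in>C. g u v) = (\<Sum>u\<in>C. \<Sum>v\<in>C. \<Sum>x\<in>I. ind u x + ind v x - 2 * ind u x * ind v x)"
      by (intro sum.cong refl) (simp add: gcc)
    also have "\<dots> = (\<Sum>u\<in>C. \<Sum>x\<in>I. \<Sum>v\<in>C. ind u x + ind v x - 2 * ind u x * ind v x)"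
      by (intro sum.cong refl sum.swap)
    also have "\<dots> = (\<Sum>x\<in>I. \<Sum>u\<in>C. \<Sum>v\<in>C. ind u x + ind v x - 2 * ind u x * ind v x)"
      by (rule sum.swap)
    also have "\<dots> = (\<Sum>x\<in>I. 2 * c * real (dg x) - 2 * real (dg x)^2)"
    proof (rule sum.cong[OF refl])
      fix x
      define D where "D = (\<Sum>u\<in>C. ind u x)"
      have dD: "real (dg x) = D" unfolding D_def by (rule dg_sum)
      have inn: "(\<Sum>v\<in>C. ind u x + ind v x - 2 * ind u x * ind v x) = c * ind u x + D - ind u x * (2 * D)" for u
      proof -
        have "(\<Sum>v\<in>C. ind u x + ind v x - 2 * ind u x * ind v x)
           = (\<Sum>v\<in>C. ind u x) + (\<Sum>v\<in>C. ind v x) - (\<Sum>v\<in>C. (2 * ind u x) * ind v x)"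
          by (simp add: sum_subtractf sum.distrib)
        also have "\<dots> = c * ind u x + D - ind u x * (2 * D)"
          unfolding D_def c_def by (simp add: sum_distrib_left[symmetric])
        finally show ?thesis .
      qed
      have "(\<Sum>u\<in>C. \<Sum>v\<in>C. ind u x + ind v x - 2 * ind u x * ind v x)
         = (\<Sum>u\<in>C. c * ind u x + D - ind u x * (2 * D))" by (simp add: inn)
      also have "\<dots> = (\<Sum>u\<in>C. c * ind u x) + (\<Sum>u\<in>C. D) - (\<Sum>u\<in>C. ind u x * (2 * D))"
        by (simp add: sum_subtractf sum.distrib)
      also have "\<dots> = c * D + c * D - D * (2 * D)"
        unfolding D_def c_def by (simp add: sum_distrib_left[symmetric] sum_distrib_right[symmetric])
      also have "\<dots> = 2 * c * real (dg x) - 2 * real (dg x)^2"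
        unfolding dD by (simp add: power2_eq_square)
      finally show "(\<Sum>u\<in>C. \<Sum>v\<in>C. ind u x + ind v x - 2 * ind u x * ind v x)
         = 2 * c * real (dg x) - 2 * real (dg x)^2" .
    qed
    finally show ?thesis .
  qed
  have CI: "(\<Sum>u\<in>C. \<Sum>v\<in>I. g u v) = (\<Sum>x\<in>I. real (dg x) * (N - 1 - real (dg x)))"
  proof -
    have "(\<Sum>u\<in>C. \<Sum>v\<in>I. g u v) = (\<Sum>u\<in>C. \<Sum>v\<in>I. ind u v * (N - 1 - real (dg v)))"
      by (rule sum.cong[OF refl], rule sum.cong[OF refl]) (use dj in \<open>auto simp: g_def bet_def ind_def N_def\<close>)
    also have "\<dots> = (\<Sum>v\<in>I. \<Sum>u\<in>C. ind u v * (N - 1 - real (dg v)))" by (rule sum.swap)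
    also have "\<dots> = (\<Sum>x\<in>I. real (dg x) * (N - 1 - real (dg x)))"
      by (simp add: dg_sum sum_distrib_right)
    finally show ?thesis .
  qed
  have IC: "(\<Sum>u\<in>I. \<Sum>v\<in>C. g u v) = (\<Sum>x\<in>I. real (dg x) * (N - 1 - real (dg x)))"
  proof -
    have "(\<Sum>u\<in>I. \<Sum>v\<in>C. g u v) = (\<Sum>u\<in>I. \<Sum>v\<in>C. ind v u * (N - 1 - real (dg u)))"
      by (rule sum.cong[OF refl], rule sum.cong[OF refl]) (use dj symE in \<open>auto simp: g_def bet_def ind_def N_def\<close>)
    also have "\<dots> = (\<Sum>x\<in>I. real (dg x) * (N - 1 - real (dg x)))"
      by (simp add: dg_sum sum_distrib_right)
    finally show ?thesis .
  qed
  have "(\<Sum>x\<in>I. 2 * c * real (dg x) - 2 * real (dg x)^2) + (\<Sum>x\<in>I. real (dg x) * (N - 1 - real (dg x)))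
      + ((\<Sum>x\<in>I. real (dg x) * (N - 1 - real (dg x))) + 0)
    = (\<Sum>x\<in>I. (2 * c * real (dg x) - 2 * real (dg x)^2) + real (dg x) * (N - 1 - real (dg x))
          + real (dg x) * (N - 1 - real (dg x)))"
    by (simp add: sum.distrib sum_distrib_left)
  also have "\<dots> = (\<Sum>x\<in>I. 2 * (real (dg x) * (N + c - 1) - 2 * real (dg x)^2))"
    by (rule sum.cong) (auto simp: algebra_simps power2_eq_square)
  also have "\<dots> = 2 * (\<Sum>x\<in>I. real (dg x) * (N + c - 1) - 2 * real (dg x)^2)"
    by (simp add: sum_distrib_left)
  finally show ?thesis unfolding S0 S1 II CC CI IC N_def c_def .
qed


lemma m_sum: "real (card {(x, y). x \<in> C \<and> y \<in> I \<and> E x y}) = (\<Sum>y\<in>I. real (dg y))"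
proof -
  have st: "{(x, y). x \<in> C \<and> y \<in> I \<and> E x y} = {p \<in> C \<times> I. E (fst p) (snd p)}" by auto
  have "real (card {p \<in> C \<times> I. E (fst p) (snd p)}) = (\<Sum>p\<in>C \<times> I. if E (fst p) (snd p) then 1 else 0)"
    using finC finI by (intro card_sum_ind) simp
  also have "\<dots> = (\<Sum>x\<in>C. \<Sum>y\<in>I. ind x y)"
    unfolding sum.cartesian_product ind_def by (rule sum.cong) auto
  also have "\<dots> = (\<Sum>y\<in>I. \<Sum>x\<in>C. ind x y)" by (rule sum.swap)
  also have "\<dots> = (\<Sum>y\<in>I. real (dg y))" by (simp add: dg_sum)
  finally show ?thesis unfolding st .
qed

lemma m_le: "card {(x, y). x \<in> C \<and> y \<in> I \<and> E x y} \<le> card C * card I"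
proof -
  have "card {(x, y). x \<in> C \<and> y \<in> I \<and> E x y} \<le> card (C \<times> I)"
    using finC finI by (intro card_mono) auto
  then show ?thesis by (simp add: card_cartesian_product)
qed

end

theorem theorem2:
  fixes V C I :: "'a set" and E :: "'a \<Rightarrow> 'a \<Rightarrow> bool"
    and n m :: nat and \<alpha> :: real
  assumes n_pos: "n > 0"
    and alpha: "0 \<le> \<alpha>" "\<alpha> \<le> 1"
    and graph: "simple_graph V E"
    and split: "V = C \<union> I" "C \<inter> I = {}"
    and cardC: "real (card C) = \<alpha> * real n"
    and cardI: "real (card I) = (1 - \<alpha>) * real n"
    and clique: "\<forall>x\<in>C. \<forall>y\<in>C. x \<noteq> y \<longrightarrow> E x y"
    and indep: "\<forall>x\<in>I. \<forall>y\<in>I. \<not> E x y"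
    and m_def: "m = card {(x, y). x \<in> C \<and> y \<in> I \<and> E x y}"
  shows "mostar V E \<le> ((1 + \<alpha>) * n - 1) * m - 2 * (real m)^2 / ((1 - \<alpha>) * n)
    \<and> ((1 + \<alpha>) * n - 1) * m - 2 * (real m)^2 / ((1 - \<alpha>) * n)
        \<le> (if \<alpha> \<le> 1/3 - 1 / (3 * real n)
            then \<alpha> * (1 - \<alpha>) * (real n)^2 * ((1 - \<alpha>) * n - 1)
            else 1/8 * (1 - \<alpha>) * n * ((1 + \<alpha>) * n - 1)^2)
    \<and> mostar V E \<le> 4/27 * (real n)^3"
proof -
  interpret S: splitg V C I E by (rule splitg.intro[OF graph split(1) split(2) clique indep])
  define c where "c = \<alpha> * real n"
  define i where "i = (1 - \<alpha>) * real n"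
  define M where "M = real m"
  define A where "A = (1 + \<alpha>) * real n - 1"
  define Q where "Q = (\<Sum>x\<in>I. real (S.dg x)^2)"
  have N1: "real n \<ge> 1" using n_pos by simp
  have cV: "real (card V) = real n"
  proof -
    have "card V = card C + card I" unfolding split(1) using S.finC S.finI split(2) by (rule card_Un_disjoint)
    then show ?thesis using cardC cardI by (simp add: algebra_simps)
  qed
  have Msum: "M = (\<Sum>x\<in>I. real (S.dg x))" unfolding M_def m_def by (rule S.m_sum)
  have Mle: "M \<le> c * i"
  proof -
    have "real m \<le> real (card C) * real (card I)" using S.m_le unfolding m_def
      by (metis of_nat_le_iff of_nat_mult)
    then show ?thesis unfolding M_def c_def i_def cardC cardI .
  qed
  have M0: "0 \<le> M" unfolding M_def by simp
  have c0: "0 \<le> c" "0 \<le> i" using alpha unfolding c_def i_def by auto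
  have Aeq: "A = i + 2 * c - 1" unfolding A_def i_def c_def by (simp add: algebra_simps)
  have mo: "mostar V E \<le> A * M - 2 * Q"
  proof -
    have "mostar V E \<le> (2 * (\<Sum>x\<in>I. real (S.dg x) * (real (card V) + real (card C) - 1) - 2 * real (S.dg x)^2)) / 2"
      using S.mostar_le unfolding S.sum_bet .
    also have "\<dots> = (\<Sum>x\<in>I. real (S.dg x) * (real (card V) + real (card C) - 1) - 2 * real (S.dg x)^2)"
      by simp
    also have "\<dots> = (\<Sum>x\<in>I. real (S.dg x) * A - 2 * real (S.dg x)^2)"
    proof (rule sum.cong[OF refl])
      fix x
      have "real (card V) + real (card C) - 1 = A" unfolding cV cardC A_def by (simp add: algebra_simps)
      then show "real (S.dg x) * (real (card V) + real (card C) - 1) - 2 * real (S.dg x)^2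
          = real (S.dg x) * A - 2 * real (S.dg x)^2" by simp
    qed
    also have "\<dots> = (\<Sum>x\<in>I. real (S.dg x) * A) - (\<Sum>x\<in>I. 2 * real (S.dg x)^2)"
      by (rule sum_subtractf)
    also have "\<dots> = A * M - 2 * Q" unfolding Msum Q_def
      by (simp only: sum_distrib_right[symmetric] sum_distrib_left[symmetric] mult.commute)
    finally show ?thesis .
  qed
  have Qge: "M^2 / i \<le> Q"
    using cs_ineq[OF S.finI, of "\<lambda>x. real (S.dg x)"] unfolding Msum Q_def i_def cardI .
  have first: "mostar V E \<le> A * M - 2 * M^2 / i" using mo Qge by linarith
  have second: "A * M - 2 * M^2 / i \<le> (if \<alpha> \<le> 1/3 - 1 / (3 * real n)
            then \<alpha> * (1 - \<alpha>) * (real n)^2 * ((1 - \<alpha>) * n - 1)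
            else 1/8 * (1 - \<alpha>) * n * ((1 + \<alpha>) * n - 1)^2)"
  proof (cases "\<alpha> = 1")
    case True
    then have "i = 0" unfolding i_def by simp
    then have "M = 0" using Mle M0 by simp
    moreover have "\<not> \<alpha> \<le> 1/3 - 1 / (3 * real n)" using True N1 by (simp add: field_simps)
    ultimately show ?thesis using True by simp
  next
    case False
    then have ip: "i > 0" using alpha n_pos unfolding i_def by simp
    show ?thesis
    proof (cases "\<alpha> \<le> 1/3 - 1 / (3 * real n)")
      case True
      then have "3 * c \<le> i + c - 1" using N1 unfolding c_def i_def by (simp add: field_simps)
      then have "A * M - 2 * M^2 / i \<le> c * i * (i - 1)" unfolding Aeq
        using arith_if[OF ip c0(1) M0 Mle] by simp
      moreover have "c * i * (i - 1) = \<alpha> * (1 - \<alpha>) * (real n)^2 * ((1 - \<alpha>) * n - 1)"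
        unfolding c_def i_def by (simp add: power2_eq_square algebra_simps)
      ultimately show ?thesis using True by simp
    next
      case False
      have "A * M - 2 * M^2 / i \<le> i * A^2 / 8" using arith_else[OF ip] .
      moreover have "i * A^2 / 8 = 1/8 * (1 - \<alpha>) * n * ((1 + \<alpha>) * n - 1)^2"
        unfolding i_def A_def by simp
      ultimately show ?thesis using False by simp
    qed
  qed
  have third: "(if \<alpha> \<le> 1/3 - 1 / (3 * real n)
            then \<alpha> * (1 - \<alpha>) * (real n)^2 * ((1 - \<alpha>) * n - 1)
            else 1/8 * (1 - \<alpha>) * n * ((1 + \<alpha>) * n - 1)^2) \<le> 4/27 * (real n)^3"
  proof (cases "\<alpha> \<le> 1/3 - 1 / (3 * real n)")
    case True
    have "\<alpha> * (1 - \<alpha>) * (real n)^2 * ((1 - \<alpha>) * n - 1) \<le> \<alpha> * (1 - \<alpha>) * (real n)^2 * ((1 - \<alpha>) * n)"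
      using alpha by (intro mult_left_mono) auto
    also have "\<dots> = (\<alpha> * (1 - \<alpha>)^2) * (real n)^3" by (simp add: power2_eq_square power3_eq_cube)
    also have "\<dots> \<le> 4/27 * (real n)^3" using cubic1[OF alpha] by (intro mult_right_mono) auto
    finally show ?thesis using True by simp
  next
    case False
    have p0: "0 \<le> (1 + \<alpha>) * n - 1" 
    proof -
      have "1 * real n \<le> (1 + \<alpha>) * real n" using alpha by (intro mult_right_mono) auto
      then have "real n \<le> (1 + \<alpha>) * real n" by simp
      then show ?thesis using N1 by linarith
    qed
    have "((1 + \<alpha>) * n - 1)^2 \<le> ((1 + \<alpha>) * n)^2" using p0 by (intro power_mono) auto
    then have "1/8 * (1 - \<alpha>) * n * ((1 + \<alpha>) * n - 1)^2 \<le> 1/8 * (1 - \<alpha>) * n * ((1 + \<alpha>) * n)^2"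
      using alpha by (intro mult_left_mono) auto
    also have "\<dots> = ((1 - \<alpha>) * (1 + \<alpha>)^2 / 8) * (real n)^3" by (simp add: power2_eq_square power3_eq_cube)
    also have "\<dots> \<le> 4/27 * (real n)^3" using cubic2[OF alpha] by (intro mult_right_mono) auto
    finally show ?thesis using False by simp
  qed
  have e1: "((1 + \<alpha>) * n - 1) * m - 2 * (real m)^2 / ((1 - \<alpha>) * n) = A * M - 2 * M^2 / i"
    unfolding A_def M_def i_def by simp
  show ?thesis unfolding e1 using first second third by linarith
qed

end
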